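(* Let $\mathscr{U}$ be a bounded monomial polyhedron represented by $B\in M_n(\mathbb{Z})$ with $\det B>0$ and $B^{-1}\succeq0$, and let $A=\operatorname{adj}B$. Let $\beta\in(\mathbb{Z}^n)^\dagger$ and $p>0$. Then $\int_{\mathscr{U}}|z^\beta|^p\,dV(z)<\infty$ if and only if $(p\beta+2\cdot\mathbb{1})A\succ0$ (all entries strictly positive).
   Context: A monomial polyhedron defined by $B$ with rows $b^j$ is $\{z\in\mathbb{C}^n:\prod_k|z_k|^{b^j_k}<1\ \forall j\}$, excluding points where a product is undefined due to division by zero. $(\mathbb{Z}^n)^\dagger$ denotes integer row vectors; $z^\beta=\prod_jz_j^{\beta_j}$; $\mathbb{1}=(1,\dots,1)$ row vector; $\succ$ is entrywise strict inequality. *)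

theory Defs
  imports "HOL-Analysis.Analysis"
begin

text \<open>Adjugate (classical adjoint) of a square matrix: entry (i,j) is the (j,i) cofactor,
  i.e. the determinant of the matrix obtained from B by replacing row j with the
  i-th standard unit row vector.\<close>
definition adjugate :: "'a::comm_ring_1^'n^'n \<Rightarrow> 'a^'n^'n" where
  "adjugate B = (\<chi> i j. det (\<chi> k. if k = j then axis i 1 else B $ k))"

text \<open>Monomial polyhedron defined by the integer matrix B with rows b^j:
  all z in C^n with prod_k |z_k|^(b^j_k) < 1 for all j, excluding points where
  some product is undefined (a zero coordinate raised to a negative power).\<close>
definition monomial_polyhedron :: "int^'n^'n \<Rightarrow> (complex^'n) set" where
  "monomial_polyhedron B =
     {z. (\<forall>j k. B $ j $ k < 0 \<longrightarrow> z $ k \<noteq> 0) \<and>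
         (\<forall>j. (\<Prod>k\<in>UNIV. norm (z $ k) powi (B $ j $ k)) < 1)}"

definition monomial :: "int^'n \<Rightarrow> complex^'n \<Rightarrow> complex" where
  "monomial \<beta> z = (\<Prod>k\<in>UNIV. (z $ k) powi (\<beta> $ k))"

end

theory Submission
  imports Defs
begin

lemma measurable_vec_lambda_PiM:
  "(\<lambda>f. \<chi> i. f i) \<in> measurable (PiM UNIV (\<lambda>_::'n::finite. borel)) (borel :: ('a::euclidean_space^'n) measure)"
proof (subst borel_measurable_euclidean_space, intro ballI)
  fix b :: "'a^'n" assume "b \<in> Basis"
  then obtain i u where b: "b = axis i u" "u \<in> Basis" unfolding Basis_vec_def by auto
  have "(\<lambda>f::'n\<Rightarrow>'a. (\<chi> i. f i) \<bullet> b) = (\<lambda>f. f i \<bullet> u)" by (simp add: b inner_axis)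
  moreover have "(\<lambda>f::'n\<Rightarrow>'a. f i \<bullet> u) \<in> borel_measurable (PiM UNIV (\<lambda>_. borel))" by measurable
  ultimately show "(\<lambda>f::'n\<Rightarrow>'a. (\<chi> i. f i) \<bullet> b) \<in> borel_measurable (PiM UNIV (\<lambda>_. borel))" by simp
qed

lemma measurable_vec_nth[measurable]: "(\<lambda>x::'a::euclidean_space^'n. x $ i) \<in> borel_measurable borel"
  by (intro borel_measurable_continuous_onI continuous_intros)

lemma lborel_vec:
  "(lborel :: ('a::euclidean_space^'n) measure) = distr (PiM UNIV (\<lambda>_. lborel)) borel (\<lambda>f. \<chi> i. f i)"
proof (rule lborel_eqI)
  interpret finite_product_sigma_finite "\<lambda>_::'n. (lborel::'a measure)" UNIV by standard auto
  fix l u :: "'a^'n" assume lu: "\<And>b. b \<in> Basis \<Longrightarrow> l \<bullet> b \<le> u \<bullet> b"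
  have meas: "(\<lambda>f. \<chi> i. f i) \<in> measurable (PiM UNIV (\<lambda>_::'n. lborel)) (borel :: ('a^'n) measure)"
  proof -
    have "sets (PiM UNIV (\<lambda>_::'n. (lborel::'a measure))) = sets (PiM UNIV (\<lambda>_::'n. (borel::'a measure)))"
      by (rule sets_PiM_cong) auto
    then show ?thesis using measurable_vec_lambda_PiM
      by (subst measurable_cong_sets[OF _ refl]) auto
  qed
  have pre: "(\<lambda>f. \<chi> i. f i) -` box l u \<inter> space (PiM UNIV (\<lambda>_::'n. lborel)) = (\<Pi>\<^sub>E i\<in>UNIV. box (l$i) (u$i))"
    by (auto simp: mem_box Basis_vec_def inner_axis space_PiM PiE_def Pi_iff)
  have "emeasure (distr (PiM UNIV (\<lambda>_. lborel)) borel (\<lambda>f. \<chi> i. f i)) (box l u)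
      = emeasure (PiM UNIV (\<lambda>_::'n. lborel)) (\<Pi>\<^sub>E i\<in>UNIV. box (l$i) (u$i))"
    using meas by (subst emeasure_distr) (auto simp: pre)
  also have "\<dots> = (\<Prod>i\<in>UNIV. emeasure lborel (box (l$i) (u$i)))"
    by (rule emeasure_PiM) auto
  also have "\<dots> = (\<Prod>i\<in>UNIV. ennreal (\<Prod>b\<in>Basis. (u$i - l$i) \<bullet> b))"
  proof (rule prod.cong[OF refl])
    fix i
    have "\<And>b. b \<in> Basis \<Longrightarrow> l$i \<bullet> b \<le> u$i \<bullet> b"
      using lu by (metis inner_axis axis_in_Basis_iff)
    then show "emeasure lborel (box (l$i) (u$i)) = ennreal (\<Prod>b\<in>Basis. (u$i - l$i) \<bullet> b)"
      by (subst emeasure_lborel_box_eq) (auto simp: box_eq_empty inner_diff_left not_less)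
  qed
  also have "\<dots> = ennreal (\<Prod>i\<in>UNIV. \<Prod>b\<in>Basis. (u$i - l$i) \<bullet> b)"
    by (rule prod_ennreal) (use lu in \<open>auto intro!: prod_nonneg simp: inner_diff_left inner_axis[symmetric]\<close>)
  also have "(\<Prod>i\<in>UNIV. \<Prod>b\<in>Basis. (u$i - l$i) \<bullet> b) = (\<Prod>b\<in>Basis. (u - l) \<bullet> b)"
  proof -
    have "(\<Prod>b\<in>Basis. (u - l) \<bullet> b) = (\<Prod>i\<in>UNIV. \<Prod>b\<in>(\<lambda>v. axis i v) ` Basis. (u - l) \<bullet> b)"
      unfolding Basis_vec_def
      by (subst prod.UNION_disjoint) (auto simp: axis_eq_axis UNION_singleton_eq_range)
    also have "\<dots> = (\<Prod>i\<in>UNIV. \<Prod>b\<in>Basis. (u$i - l$i) \<bullet> b)"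
      by (subst prod.reindex) (auto intro!: inj_onI simp: axis_eq_axis inner_axis)
    finally show ?thesis by simp
  qed
  finally show "emeasure (distr (PiM UNIV (\<lambda>_. lborel)) borel (\<lambda>f. \<chi> i. f i)) (box l u) = (\<Prod>b\<in>Basis. (u - l) \<bullet> b)" .
qed simp

lemma my_less_ln_iff: "0 < (x::real) \<Longrightarrow> a < ln x \<longleftrightarrow> exp a < x"
  using exp_less_cancel_iff[of a "ln x"] by simp
lemma my_ln_less_iff: "0 < (x::real) \<Longrightarrow> ln x < a \<longleftrightarrow> x < exp a"
  using exp_less_cancel_iff[of "ln x" a] by simp
lemma annulus:
  fixes a b :: real
  shows "emeasure lborel {w::complex. a < ln (cmod w) \<and> ln (cmod w) < b} = ennreal (pi * (exp (2*b) - exp (2*a)))"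
proof (cases "a < b")
  case False
  then have "{w::complex. a < ln (cmod w) \<and> ln (cmod w) < b} = {}" by auto
  moreover have "pi * (exp (2*b) - exp (2*a)) \<le> 0" using False by (simp add: mult_nonneg_nonpos)
  ultimately show ?thesis by (metis emeasure_empty ennreal_eq_0_iff)
next
  case True
  let ?S = "{w::complex. a < ln (cmod w) \<and> ln (cmod w) < b}"
  let ?A = "ball (0::complex) (exp b) - cball 0 (exp a)"
  have sub1: "?A \<subseteq> ?S"
  proof
    fix w assume "w \<in> ?A"
    then have "exp a < cmod w" "cmod w < exp b" by auto
    moreover then have "cmod w > 0" by (meson exp_gt_zero less_trans)
    ultimately show "w \<in> ?S" by (simp add: my_less_ln_iff my_ln_less_iff)
  qed
  have sub2: "?S \<subseteq> ?A \<union> {0}"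
  proof
    fix w assume w: "w \<in> ?S"
    show "w \<in> ?A \<union> {0}"
    proof (cases "w = 0")
      case False
      then have "cmod w > 0" by simp
      with w show ?thesis by (auto simp: my_less_ln_iff my_ln_less_iff)
    qed simp
  qed
  have Smeas: "?S \<in> sets borel" by measurable
  have "emeasure lborel ?A \<le> emeasure lborel ?S" by (rule emeasure_mono[OF sub1]) (use Smeas in simp)
  moreover have "emeasure lborel ?S \<le> emeasure lborel (?A \<union> {0})" by (rule emeasure_mono[OF sub2]) simp
  moreover have "emeasure lborel (?A \<union> {0}) = emeasure lborel ?A"
    by (rule emeasure_Un_null_set) auto
  ultimately have eq: "emeasure lborel ?S = emeasure lborel ?A" by (metis antisym)
  have "cball (0::complex) (exp a) \<subseteq> ball 0 (exp b)" using True by (auto intro: order.strict_trans1)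
  then have "emeasure lborel ?A = emeasure lborel (ball (0::complex) (exp b)) - emeasure lborel (cball (0::complex) (exp a))"
    by (subst emeasure_Diff) (auto simp: emeasure_cball)
  also have "\<dots> = ennreal (pi * exp b ^ 2) - ennreal (pi * exp a ^ 2)"
    by (simp add: emeasure_cball emeasure_ball eval_unit_ball_vol)
  also have "\<dots> = ennreal (pi * exp b ^ 2 - pi * exp a ^ 2)"
    by (rule ennreal_minus[OF mult_nonneg_nonneg[OF pi_ge_zero zero_le_power2]])
  also have "pi * exp b ^ 2 - pi * exp a ^ 2 = pi * (exp (2*b) - exp (2*a))"
  proof -
    have e: "\<And>x::real. (exp x)^2 = exp (2*x)" by (rule exp_double[symmetric])
    show ?thesis by (simp only: e right_diff_distrib)
  qed
  finally have calc: "emeasure lborel ?A = ennreal (pi * (exp (2*b) - exp (2*a)))" .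
  show ?thesis using eq calc by (rule trans)
qed
lemma int1d:
  fixes a b :: real
  shows "(\<integral>\<^sup>+ t. ennreal (2*pi*exp(2*t)) * indicator {a<..<b} t \<partial>lborel) = ennreal (pi * (exp (2*b) - exp (2*a)))"
proof (cases "a < b")
  case False
  then have "{a<..<b} = {}" by auto
  moreover have "pi * (exp (2*b) - exp (2*a)) \<le> 0" using False by (simp add: mult_nonneg_nonpos)
  ultimately show ?thesis by (simp add: ennreal_eq_0_iff)
next
  case True
  have "(\<integral>\<^sup>+ t. ennreal (2*pi*exp(2*t)) * indicator {a<..<b} t \<partial>lborel)
      = (\<integral>\<^sup>+ t. ennreal (2*pi*exp(2*t)) * indicator {a..b} t \<partial>lborel)"
    by (rule nn_integral_cong_AE)
       (use AE_lborel_singleton[of a] AE_lborel_singleton[of b] in \<open>auto split: split_indicator\<close>)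
  also have "\<dots> = ennreal (pi * exp (2*b) - pi * exp (2*a))"
    by (rule nn_integral_FTC_Icc[where F="\<lambda>t. pi * exp (2*t)"])
       (use True in \<open>auto intro!: derivative_eq_intros\<close>)
  finally show ?thesis by (simp add: algebra_simps)
qed

lemma Basis_real_vec: "(Basis :: (real^'n) set) = range (\<lambda>k. axis k 1)"
  by (auto simp: Basis_vec_def)

definition dens :: "real^'n \<Rightarrow> ennreal" where
  "dens x = (\<Prod>k\<in>UNIV. ennreal (2*pi*exp(2*x$k)))"

lemma dens_measurable[measurable]: "dens \<in> borel_measurable borel"
  unfolding dens_def by measurable

lemma dens_box:
  fixes l u :: "real^'n"
  shows   "emeasure (density lborel dens) (box l u) = (\<Prod>k\<in>UNIV. ennreal (pi * (exp (2*(u$k)) - exp (2*(l$k)))))"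
proof -
  let ?f = "\<lambda>(b::real^'n) t. ennreal (2*pi*exp(2*t)) * indicator {l\<bullet>b<..<u\<bullet>b} t"
  have "emeasure (density lborel dens) (box l u) = (\<integral>\<^sup>+ x. dens x * indicator (box l u) x \<partial>lborel)"
    by (subst emeasure_density) (auto simp: dens_def)
  also have "\<dots> = (\<integral>\<^sup>+ x. (\<Prod>b\<in>Basis. ?f b (x \<bullet> b)) \<partial>lborel)"
  proof (rule nn_integral_cong)
    fix x :: "real^'n"
    have "(\<Prod>b\<in>Basis. ?f b (x \<bullet> b)) = (\<Prod>k\<in>UNIV. ?f (axis k 1) (x \<bullet> axis k 1))"
      unfolding Basis_real_vec by (subst prod.reindex) (auto intro!: inj_onI simp: axis_eq_axis)
    also have "\<dots> = (\<Prod>k\<in>UNIV. ennreal (2*pi*exp(2*x$k)) * indicator {l$k<..<u$k} (x$k))"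
      by (simp add: inner_axis)
    also have "\<dots> = dens x * (\<Prod>k\<in>UNIV. indicator {l$k<..<u$k} (x$k))"
      by (simp add: dens_def prod.distrib)
    also have "(\<Prod>k\<in>UNIV. indicator {l$k<..<u$k} (x$k) :: ennreal) = indicator (box l u) x"
      by (auto simp: mem_box_cart indicator_def)
    finally show "dens x * indicator (box l u) x = (\<Prod>b\<in>Basis. ?f b (x \<bullet> b))" by simp
  qed
  also have "\<dots> = (\<Prod>b\<in>Basis. (\<integral>\<^sup>+ t. ?f b t \<partial>lborel))"
    by (rule nn_integral_lborel_prod) auto
  also have "\<dots> = (\<Prod>b\<in>Basis. ennreal (pi * (exp (2*(u\<bullet>b)) - exp (2*(l\<bullet>b)))))"
    by (simp add: int1d)
  also have "\<dots> = (\<Prod>k\<in>UNIV. ennreal (pi * (exp (2*(u$k)) - exp (2*(l$k)))))"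
    unfolding Basis_real_vec by (subst prod.reindex) (auto intro!: inj_onI simp: axis_eq_axis inner_axis)
  finally show ?thesis .
qed
lemma emeasure_vec_prod:
  fixes S :: "'n::finite \<Rightarrow> 'a::euclidean_space set"
  assumes [measurable]: "\<And>i. S i \<in> sets borel"
  shows "emeasure lborel {z::'a^'n. \<forall>i. z$i \<in> S i} = (\<Prod>i\<in>UNIV. emeasure lborel (S i))"
proof -
  interpret finite_product_sigma_finite "\<lambda>_::'n. (lborel::'a measure)" UNIV by standard auto
  have meas: "(\<lambda>f. \<chi> i. f i) \<in> measurable (PiM UNIV (\<lambda>_::'n. lborel)) (borel :: ('a^'n) measure)"
  proof -
    have "sets (PiM UNIV (\<lambda>_::'n. (lborel::'a measure))) = sets (PiM UNIV (\<lambda>_::'n. (borel::'a measure)))"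
      by (rule sets_PiM_cong) auto
    then show ?thesis using measurable_vec_lambda_PiM
      by (subst measurable_cong_sets[OF _ refl]) auto
  qed
  have Z: "{z::'a^'n. \<forall>i. z$i \<in> S i} \<in> sets borel" by measurable
  have pre: "(\<lambda>f. \<chi> i. f i) -` {z::'a^'n. \<forall>i. z$i \<in> S i} \<inter> space (PiM UNIV (\<lambda>_::'n. lborel)) = (\<Pi>\<^sub>E i\<in>UNIV. S i)"
    by (auto simp: space_PiM PiE_def Pi_iff)
  show ?thesis
    apply (subst lborel_vec)
    apply (subst emeasure_distr[OF meas Z])
    apply (simp only: pre)
    by (rule emeasure_PiM) auto
qed

definition Lg :: "complex^'n \<Rightarrow> real^'n" where
  "Lg z = (\<chi> k. ln (cmod (z$k)))"

lemma Lg_measurable[measurable]: "Lg \<in> borel_measurable borel"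
proof -
  have "(\<lambda>z::complex^'n. ln (cmod (z$k))) \<in> borel_measurable borel" for k by measurable
  then show ?thesis unfolding Lg_def
    by (subst borel_measurable_euclidean_space) (auto simp: Basis_real_vec inner_axis)
qed

lemma distr_Lg: "distr (lborel :: (complex^'n) measure) borel Lg = density lborel dens"
proof (rule measure_eqI_generator_eq)
  let ?E = "range (\<lambda>(a, b). box a b::(real^'n) set)"
  show "Int_stable ?E"
    by (auto simp: Int_stable_def box_Int_box)
  show "?E \<subseteq> Pow UNIV" "sets (distr (lborel :: (complex^'n) measure) borel Lg) = sigma_sets UNIV ?E"
     "sets (density lborel dens) = sigma_sets UNIV ?E"
    by (simp_all add: borel_eq_box)
  have eq: "emeasure (distr (lborel :: (complex^'n) measure) borel Lg) (box l u) 
      = (\<Prod>k\<in>UNIV. ennreal (pi * (exp (2*(u$k)) - exp (2*(l$k)))))" for l u :: "real^'n"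
  proof -
    have "Lg -` box l u \<inter> space lborel = {z. \<forall>k. z$k \<in> {w. l$k < ln (cmod w) \<and> ln (cmod w) < u$k}}"
      by (auto simp: Lg_def mem_box_cart)
    moreover have "emeasure lborel {z::complex^'n. \<forall>k. z$k \<in> {w. l$k < ln (cmod w) \<and> ln (cmod w) < u$k}}
       = (\<Prod>k\<in>UNIV. emeasure lborel {w::complex. l$k < ln (cmod w) \<and> ln (cmod w) < u$k})"
      by (rule emeasure_vec_prod) measurable
    ultimately show ?thesis
      by (simp add: emeasure_distr annulus del: mem_Collect_eq)
  qed
  show "emeasure (distr (lborel :: (complex^'n) measure) borel Lg) X = emeasure (density lborel dens) X"
    if "X \<in> ?E" for X
    using that by (auto simp: eq dens_box)
  let ?A = "\<lambda>n::nat. box (- (real n *\<^sub>R One)) (real n *\<^sub>R One) :: (real^'n) set"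
  show "range ?A \<subseteq> ?E" "(\<Union>i. ?A i) = UNIV"
    unfolding UN_box_eq_UNIV by auto
  show "emeasure (distr (lborel :: (complex^'n) measure) borel Lg) (?A i) \<noteq> \<infinity>" for i
    by (simp add: eq ennreal_prod_eq_top)
qed

lemma inv_props:
  fixes A :: "real^'n^'n"
  assumes "det A \<noteq> 0"
  shows "A ** matrix_inv A = mat 1" "matrix_inv A ** A = mat 1"
proof -
  have "invertible A" using assms invertible_det_nz by blast
  then have "\<exists>A'. A ** A' = mat 1 \<and> A' ** A = mat 1" unfolding invertible_def by blast
  then have "A ** matrix_inv A = mat 1 \<and> matrix_inv A ** A = mat 1"
    unfolding matrix_inv_def by (rule someI_ex)
  then show "A ** matrix_inv A = mat 1" "matrix_inv A ** A = mat 1" by auto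
qed

lemma det_of_int: "det (map_matrix real_of_int B) = real_of_int (det B)"
  by (simp add: det_def of_int_sum of_int_prod)

lemma adj_entry:
  fixes B :: "int^'n^'n"
  assumes "det B \<noteq> 0"
  shows "map_matrix real_of_int (adjugate B) $ i $ j = det (map_matrix real_of_int B) * matrix_inv (map_matrix real_of_int B) $ i $ j"
proof -
  let ?Br = "map_matrix real_of_int B"
  let ?M = "matrix_inv ?Br"
  have d: "det ?Br \<noteq> 0" using assms by (simp add: det_of_int)
  have "map_matrix real_of_int (adjugate B) $ i $ j = real_of_int (det (\<chi> k. if k = j then axis i 1 else B $ k))"
    by (simp add: adjugate_def)
  also have "\<dots> = det (map_matrix real_of_int (\<chi> k. if k = j then axis i 1 else B $ k))"
    by (simp add: det_of_int)
  also have "map_matrix real_of_int (\<chi> k. if k = j then axis i (1::int) else B $ k)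
      = (\<chi> k. if k = j then (\<Sum>l\<in>UNIV. (row i ?M)$l *s row l ?Br) else row k ?Br)"
  proof -
    have "(\<Sum>l\<in>UNIV. (row i ?M)$l *s row l ?Br) = (?M ** ?Br) $ i"
      by (simp add: vec_eq_iff row_def matrix_matrix_mult_def sum_component)
    also have "\<dots> = axis i 1" using inv_props(2)[OF d] by (simp add: mat_def axis_def vec_eq_iff)
    finally show ?thesis
      by (auto simp: vec_eq_iff row_def axis_def)
  qed
  also have "det \<dots> = (row i ?M) $ j * det ?Br"
    by (rule cramer_lemma_transpose)
  finally show ?thesis by (simp add: row_def)
qed

lemma adj_vec:
  fixes B :: "int^'n^'n" and c :: "real^'n"
  assumes "det B \<noteq> 0"
  shows "(c v* map_matrix real_of_int (adjugate B)) $ j = det (map_matrix real_of_int B) * (c v* matrix_inv (map_matrix real_of_int B)) $ j"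
proof -
  have "\<And>i. real_of_int (adjugate B $ i $ j) = det (map_matrix real_of_int B) * matrix_inv (map_matrix real_of_int B) $ i $ j"
    using adj_entry[OF assms] by simp
  then show ?thesis by (simp add: vector_matrix_mult_def sum_distrib_left algebra_simps)
qed

lemma exp_half_int:
  fixes e :: real assumes e: "e > 0"
  shows "(\<integral>\<^sup>+ t. ennreal (exp (-e*t)) * indicator {0..} t \<partial>lborel) = ennreal (1/e)"
proof -
  have "(\<integral>\<^sup>+ t. ennreal (exp (-e*t)) * indicator {0..} t \<partial>lborel) = ennreal (0 - (- exp (-e*0) / e))"
  proof (rule nn_integral_FTC_atLeast[where F="\<lambda>t. - exp (-e*t) / e"])
    show "\<And>x. 0 \<le> x \<Longrightarrow> ((\<lambda>t. - exp (- e * t) / e) has_real_derivative exp (- e * x)) (at x)"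
      using e by (auto intro!: derivative_eq_intros simp: field_simps)
    have "filterlim (\<lambda>t. e*t) at_top at_top"
      using e by (intro filterlim_tendsto_pos_mult_at_top[OF tendsto_const] filterlim_ident) auto
    then have "filterlim (\<lambda>t. -(e*t)) at_bot at_top" by (simp add: filterlim_uminus_at_top)
    then have "((\<lambda>t. exp (-(e*t))) \<longlongrightarrow> 0) at_top" by (rule filterlim_compose[OF exp_at_bot])
    then have "((\<lambda>t. exp (- e * t)) \<longlongrightarrow> 0) at_top" by simp
    then have "((\<lambda>t. - exp (- e * t) / e) \<longlongrightarrow> - 0 / e) at_top"
      by (intro tendsto_divide tendsto_minus tendsto_const) (use e in auto)
    then show "((\<lambda>t. - exp (- e * t) / e) \<longlongrightarrow> 0) at_top" by simp
  qed auto
  then show ?thesis by simp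
qed

lemma exp_abs_int:
  fixes e :: real assumes e: "e > 0"
  shows "(\<integral>\<^sup>+ t. ennreal (exp (-e*\<bar>t\<bar>)) \<partial>lborel) < \<infinity>"
proof -
  have split: "ennreal (exp (-e*\<bar>t\<bar>)) = ennreal (exp (-e*t)) * indicator {0..} t + ennreal (exp (-e*(-t))) * indicator {0<..} (-t)" for t
    by (auto split: split_indicator)
  have "(\<integral>\<^sup>+ t. ennreal (exp (-e*\<bar>t\<bar>)) \<partial>lborel)
      = (\<integral>\<^sup>+ t. ennreal (exp (-e*t)) * indicator {0..} t \<partial>lborel) + (\<integral>\<^sup>+ t. ennreal (exp (-e*(-t))) * indicator {0<..} (-t) \<partial>lborel)"
    unfolding split by (rule nn_integral_add) auto
  also have "(\<integral>\<^sup>+ t. ennreal (exp (-e*(-t))) * indicator {0<..} (-t) \<partial>lborel)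
      = (\<integral>\<^sup>+ t. ennreal (exp (-e*t)) * indicator {0<..} t \<partial>lborel)"
  proof -
    have "(\<integral>\<^sup>+ t. ennreal (exp (-e*t)) * indicator {0<..} t \<partial>lborel)
       = (\<integral>\<^sup>+ t. ennreal (exp (-e*t)) * indicator {0<..} t \<partial>(distr lborel borel uminus))"
      by (simp add: lborel_distr_uminus)
    also have "\<dots> = (\<integral>\<^sup>+ t. ennreal (exp (-e*(-t))) * indicator {0<..} (-t) \<partial>lborel)"
      by (subst nn_integral_distr) auto
    finally show ?thesis by simp
  qed
  also have "\<dots> \<le> (\<integral>\<^sup>+ t. ennreal (exp (-e*t)) * indicator {0..} t \<partial>lborel)"
    by (rule nn_integral_mono) (auto split: split_indicator)
  finally have "(\<integral>\<^sup>+ t. ennreal (exp (-e*\<bar>t\<bar>)) \<partial>lborel) \<le> ennreal (1/e) + ennreal (1/e)"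
    using exp_half_int[OF e] by (metis add_left_mono)
  also have "\<dots> < \<infinity>" by simp
  finally show ?thesis .
qed

lemma exp_abs_int_vec:
  fixes e :: real assumes e: "e > 0"
  shows "(\<integral>\<^sup>+ x. ennreal (exp (-e * (\<Sum>k\<in>UNIV. \<bar>x$k\<bar>))) \<partial>(lborel::(real^'n) measure)) < \<infinity>"
proof -
  have "(\<integral>\<^sup>+ x. ennreal (exp (-e * (\<Sum>k\<in>UNIV. \<bar>x$k\<bar>))) \<partial>(lborel::(real^'n) measure))
      = (\<integral>\<^sup>+ x. (\<Prod>b\<in>Basis. ennreal (exp (-e * \<bar>x \<bullet> b\<bar>))) \<partial>(lborel::(real^'n) measure))"
  proof (rule nn_integral_cong)
    fix x :: "real^'n"
    have "(\<Prod>b\<in>Basis. ennreal (exp (-e * \<bar>x \<bullet> b\<bar>))) = (\<Prod>k\<in>UNIV. ennreal (exp (-e * \<bar>x \<bullet> axis k 1\<bar>)))"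
      unfolding Basis_real_vec by (subst prod.reindex) (auto intro!: inj_onI simp: axis_eq_axis)
    also have "\<dots> = ennreal (\<Prod>k\<in>UNIV. exp (-e * \<bar>x$k\<bar>))"
      by (simp add: inner_axis prod_ennreal)
    also have "(\<Prod>k\<in>UNIV. exp (-e * \<bar>x$k\<bar>)) = exp (-e * (\<Sum>k\<in>UNIV. \<bar>x$k\<bar>))"
      by (simp add: exp_sum[symmetric] sum_distrib_left)
    finally show "ennreal (exp (-e * (\<Sum>k\<in>UNIV. \<bar>x$k\<bar>))) = (\<Prod>b\<in>Basis. ennreal (exp (-e * \<bar>x \<bullet> b\<bar>)))" by simp
  qed
  also have "\<dots> = (\<Prod>b\<in>(Basis::(real^'n) set). (\<integral>\<^sup>+ t. ennreal (exp (-e * \<bar>t\<bar>)) \<partial>lborel))"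
    by (rule nn_integral_lborel_prod) auto
  also have "\<dots> < \<infinity>"
    using exp_abs_int[OF e] by (simp add: less_top[symmetric] ennreal_prod_eq_top power_eq_top_ennreal)
  finally show ?thesis .
qed

lemma cont_Av: "continuous_on UNIV (\<lambda>x::real^'n. (A *v x) $ i)"
  unfolding matrix_vector_mult_def by (auto intro!: continuous_intros)

lemma meas_Av[measurable]: "(\<lambda>x::real^'n. (A *v x) $ i) \<in> borel_measurable borel"
  by (rule borel_measurable_continuous_onI[OF cont_Av])

lemma cone_ident:
  fixes A M :: "real^'n^'n" and c x :: "real^'n"
  assumes MA: "M ** A = mat 1"
  shows "c \<bullet> x = (c v* M) \<bullet> (A *v x)"
  by (simp add: dot_lmul_matrix matrix_vector_mul_assoc MA)

lemma cone_fin: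
  fixes A M :: "real^'n^'n" and c :: "real^'n"
  assumes MA: "M ** A = mat 1" and AM: "A ** M = mat 1"
  assumes pos: "\<forall>j. (c v* M)$j > 0"
  shows "(\<integral>\<^sup>+ x. ennreal (exp (c \<bullet> x)) * indicator {x. \<forall>j. (A *v x)$j < 0} x \<partial>lborel) < \<infinity>"
proof -
  define d where "d = c v* M"
  define \<delta> where "\<delta> = Min (range (\<lambda>j. d$j))"
  define Cm where "Cm = (\<Sum>k\<in>UNIV. \<Sum>j\<in>UNIV. \<bar>M$k$j\<bar>) + 1"
  define \<epsilon> where "\<epsilon> = \<delta> / (real CARD('n) * Cm)"
  have dpos: "\<delta> > 0" using pos unfolding \<delta>_def d_def by (subst Min_gr_iff) auto
  have dle: "\<delta> \<le> d$j" for j unfolding \<delta>_def by (rule Min_le) auto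
  have Cm1: "Cm \<ge> 1" unfolding Cm_def by (auto intro!: sum_nonneg)
  have Mle: "\<bar>M$k$j\<bar> \<le> Cm" for k j
  proof -
    have "\<bar>M$k$j\<bar> \<le> (\<Sum>j\<in>UNIV. \<bar>M$k$j\<bar>)" by (rule member_le_sum) auto
    also have "\<dots> \<le> (\<Sum>k\<in>UNIV. \<Sum>j\<in>UNIV. \<bar>M$k$j\<bar>)"
      by (rule member_le_sum[where f="\<lambda>k. \<Sum>j\<in>UNIV. \<bar>M$k$j\<bar>"]) (auto intro!: sum_nonneg)
    finally show ?thesis unfolding Cm_def by simp
  qed
  have epos: "\<epsilon> > 0" unfolding \<epsilon>_def using dpos Cm1 by (auto intro!: divide_pos_pos)
  have bound: "c \<bullet> x \<le> - \<epsilon> * (\<Sum>k\<in>UNIV. \<bar>x$k\<bar>)" if xK: "\<forall>j. (A *v x)$j < 0" for x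
  proof -
    define y where "y = A *v x"
    define S where "S = (\<Sum>j\<in>UNIV. \<bar>y$j\<bar>)"
    have yneg: "y$j < 0" for j using xK y_def by auto
    have "c \<bullet> x = d \<bullet> y" unfolding d_def y_def by (rule cone_ident[OF MA])
    also have "\<dots> = (\<Sum>j\<in>UNIV. d$j * y$j)" by (simp add: inner_vec_def)
    also have "\<dots> \<le> (\<Sum>j\<in>UNIV. \<delta> * y$j)"
      by (rule sum_mono) (use yneg dle in \<open>auto intro!: mult_right_mono_neg less_imp_le\<close>)
    also have "\<dots> = - \<delta> * S" unfolding S_def using yneg by (simp add: sum_distrib_left abs_of_neg)
    finally have c1: "c \<bullet> x \<le> - \<delta> * S" .
    have xM: "x = M *v y" unfolding y_def by (simp add: matrix_vector_mul_assoc MA)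
    have xk: "\<bar>x$k\<bar> \<le> Cm * S" for k
    proof -
      have "\<bar>x$k\<bar> = \<bar>\<Sum>j\<in>UNIV. M$k$j * y$j\<bar>" by (subst xM) (simp add: matrix_vector_mult_def)
      also have "\<dots> \<le> (\<Sum>j\<in>UNIV. \<bar>M$k$j\<bar> * \<bar>y$j\<bar>)" by (rule order_trans[OF sum_abs]) (simp add: abs_mult)
      also have "\<dots> \<le> (\<Sum>j\<in>UNIV. Cm * \<bar>y$j\<bar>)" by (rule sum_mono) (auto intro!: mult_right_mono Mle)
      also have "\<dots> = Cm * S" unfolding S_def by (simp add: sum_distrib_left)
      finally show ?thesis .
    qed
    have "(\<Sum>k\<in>UNIV. \<bar>x$k\<bar>) \<le> (\<Sum>k\<in>(UNIV::'n set). Cm * S)" by (rule sum_mono) (rule xk)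
    also have "\<dots> = real CARD('n) * Cm * S" by simp
    finally have sx: "(\<Sum>k\<in>UNIV. \<bar>x$k\<bar>) \<le> real CARD('n) * Cm * S" .
    have "\<epsilon> * (\<Sum>k\<in>UNIV. \<bar>x$k\<bar>) \<le> \<epsilon> * (real CARD('n) * Cm * S)"
      using sx epos by (intro mult_left_mono) auto
    also have "\<dots> = \<delta> * S" unfolding \<epsilon>_def using Cm1 by (simp add: field_simps)
    finally show ?thesis using c1 by linarith
  qed
  have "(\<integral>\<^sup>+ x. ennreal (exp (c \<bullet> x)) * indicator {x. \<forall>j. (A *v x)$j < 0} x \<partial>lborel)
       \<le> (\<integral>\<^sup>+ x. ennreal (exp (-\<epsilon> * (\<Sum>k\<in>UNIV. \<bar>x$k\<bar>))) \<partial>(lborel::(real^'n) measure))"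
    by (rule nn_integral_mono) (auto split: split_indicator dest!: bound)
  also have "\<dots> < \<infinity>" by (rule exp_abs_int_vec[OF epos])
  finally show ?thesis .
qed


lemma cone_inf:
  fixes A M :: "real^'n^'n" and c :: "real^'n"
  assumes MA: "M ** A = mat 1" and AM: "A ** M = mat 1"
  assumes neg: "(c v* M)$j \<le> 0"
  shows "(\<integral>\<^sup>+ x. ennreal (exp (c \<bullet> x)) * indicator {x. \<forall>j. (A *v x)$j < 0} x \<partial>lborel) = \<infinity>"
proof -
  define d where "d = c v* M"
  define Ds where "Ds = (\<Sum>i\<in>UNIV. \<bar>d$i\<bar>)"
  define W0 where "W0 = (\<Inter>i\<in>UNIV. {x::real^'n. -1 < (A *v x)$i} \<inter> {x. (A *v x)$i < 0})"
  have "open W0" unfolding W0_def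
    by (intro open_INT ballI open_Int open_Collect_less cont_Av continuous_on_const) auto
  define x0 where "x0 = M *v (\<chi> i. (-1/2::real))"
  have "A *v x0 = (\<chi> i. -1/2)" unfolding x0_def by (simp add: matrix_vector_mul_assoc AM)
  then have "x0 \<in> W0" unfolding W0_def by auto
  then obtain r where r: "r > 0" "ball x0 r \<subseteq> W0" using \<open>open W0\<close> open_contains_ball by blast
  define tm where "tm m = M *v (\<chi> i. if i = j then - real m else 0)" for m :: nat
  define Bl where "Bl m = ball (x0 + tm m) r" for m
  have Atm: "A *v tm m = (\<chi> i. if i = j then - real m else 0)" for m
    unfolding tm_def by (simp add: matrix_vector_mul_assoc AM)
  have inBl: "(A *v z)$j < - real m \<and> - 1 - real m < (A *v z)$j \<and> (\<forall>i. i \<noteq> j \<longrightarrow> -1 < (A *v z)$i \<and> (A *v z)$i < 0)"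
    if "z \<in> Bl m" for z m
  proof -
    have "z - tm m \<in> ball x0 r" using that unfolding Bl_def by (simp add: dist_norm algebra_simps)
    then have w: "z - tm m \<in> W0" using r by auto
    have "A *v (z - tm m) = A *v z - (\<chi> i. if i = j then - real m else 0)"
      by (simp add: matrix_vector_mult_diff_distrib Atm)
    with w show ?thesis unfolding W0_def by (auto split: if_splits)
  qed
  have BlK: "z \<in> {x. \<forall>j. (A *v x)$j < 0}" if "z \<in> Bl m" for z m
  proof -
    have "(A *v z)$i < 0" for i using inBl[OF that] by (cases "i = j") auto
    then show ?thesis by auto
  qed
  have Blc: "c \<bullet> z \<ge> - Ds" if "z \<in> Bl m" for z m
  proof -
    define y where "y = A *v z"
    have trm: "d$i * y$i \<ge> - \<bar>d$i\<bar>" for i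
    proof (cases "i = j")
      case True
      then have "d$i \<le> 0" "y$i < 0" using neg inBl[OF that] unfolding d_def y_def by auto
      then have "d$i * y$i \<ge> 0" by (simp add: mult_nonpos_nonpos)
      then show ?thesis by linarith
    next
      case False
      then have "\<bar>y$i\<bar> < 1" using inBl[OF that] unfolding y_def by auto
      then have "\<bar>d$i * y$i\<bar> \<le> \<bar>d$i\<bar>" by (simp add: abs_mult mult_left_le)
      then show ?thesis by linarith
    qed
    have "c \<bullet> z = d \<bullet> y" unfolding d_def y_def by (rule cone_ident[OF MA])
    also have "\<dots> = (\<Sum>i\<in>UNIV. d$i * y$i)" by (simp add: inner_vec_def)
    finally have "c \<bullet> z = (\<Sum>i\<in>UNIV. d$i * y$i)" .
    moreover have "(\<Sum>i\<in>UNIV. d$i * y$i) \<ge> (\<Sum>i\<in>UNIV. - \<bar>d$i\<bar>)" by (rule sum_mono) (rule trm)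
    ultimately show ?thesis unfolding Ds_def by (simp add: sum_negf)
  qed
  have disj: "disjoint_family Bl"
  unfolding disjoint_family_on_def
  proof (intro ballI impI)
    fix m m' :: nat assume "m \<noteq> m'"
    show "Bl m \<inter> Bl m' = {}"
    proof (rule ccontr)
      assume "Bl m \<inter> Bl m' \<noteq> {}"
      then obtain z where "z \<in> Bl m" "z \<in> Bl m'" by auto
      from inBl[OF this(1)] inBl[OF this(2)] have "real m < real m' + 1" "real m' < real m + 1" by auto
      then show False using \<open>m \<noteq> m'\<close> by linarith
    qed
  qed
  have "emeasure lborel (\<Union>m. Bl m) = (\<Sum>m. emeasure lborel (Bl m))"
  proof (rule suminf_emeasure[symmetric])
    show "range Bl \<subseteq> sets lborel" by (auto simp: Bl_def)
  qed (rule disj)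
  also have "\<dots> = (\<Sum>m::nat. ennreal (unit_ball_vol (real DIM(real^'n)) * r ^ DIM(real^'n)))"
    unfolding Bl_def using r by (simp add: emeasure_ball)
  also have "\<dots> = top"
  proof -
    have uv: "unit_ball_vol (real CARD('n)) > 0" by simp
    have ns: "\<not> summable (\<lambda>m::nat. unit_ball_vol (real DIM(real^'n)) * r ^ DIM(real^'n))"
    proof -
      have uv0: "unit_ball_vol (real CARD('n)) \<noteq> 0" using uv by linarith
      show ?thesis unfolding summable_const_iff using uv0 r by simp
    qed
    have nn: "0 \<le> unit_ball_vol (real DIM(real^'n)) * r ^ DIM(real^'n)" using uv r by simp
    show ?thesis
      by (rule summable_iff_suminf_neq_top[OF nn ns])
  qed
  finally have inf: "emeasure lborel (\<Union>m. Bl m) = top" .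
  have "ennreal (exp (- Ds)) * emeasure lborel (\<Union>m. Bl m)
      = (\<integral>\<^sup>+ x. ennreal (exp (- Ds)) * indicator (\<Union>m. Bl m) x \<partial>lborel)"
    by (rule nn_integral_cmult_indicator[symmetric]) (auto simp: Bl_def)
  also have "\<dots> \<le> (\<integral>\<^sup>+ x. ennreal (exp (c \<bullet> x)) * indicator {x. \<forall>j. (A *v x)$j < 0} x \<partial>lborel)"
  proof (rule nn_integral_mono)
    fix x
    show "ennreal (exp (- Ds)) * indicator (\<Union>m. Bl m) x \<le> ennreal (exp (c \<bullet> x)) * indicator {x. \<forall>j. (A *v x)$j < 0} x"
    proof (cases "x \<in> (\<Union>m. Bl m)")
      case True
      then obtain m where m: "x \<in> Bl m" by auto
      have "x \<in> {x. \<forall>j. (A *v x)$j < 0}" using BlK[OF m] .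
      moreover have "exp (- Ds) \<le> exp (c \<bullet> x)" using Blc[OF m] by simp
      ultimately show ?thesis using True by (simp add: ennreal_leI)
    qed simp
  qed
  finally show ?thesis using inf by (simp add: ennreal_mult_top top_unique)
qed

lemma pw: "(r::real) > 0 \<Longrightarrow> r powi n = exp (real_of_int n * ln r)"
  using powr_real_of_int'[of r n] by (simp add: powr_def)

lemma AE_nonzero: "AE z in (lborel :: (complex^'n) measure). \<forall>k. z$k \<noteq> 0"
proof -
  have "AE z in (lborel :: (complex^'n) measure). z$k \<noteq> 0" for k
  proof -
    let ?S = "\<lambda>i. if i = k then {0::complex} else UNIV"
    have "emeasure lborel {z::complex^'n. \<forall>i. z$i \<in> ?S i} = (\<Prod>i\<in>UNIV. emeasure lborel (?S i))"
      by (rule emeasure_vec_prod) auto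
    also have "\<dots> = 0" by (rule prod_zero) auto
    finally have N: "{z::complex^'n. \<forall>i. z$i \<in> ?S i} \<in> null_sets lborel"
      by (auto simp: null_sets_def)
    show ?thesis by (rule AE_I'[OF N]) auto
  qed
  then show ?thesis by (auto intro: AE_finite_allI[where S=UNIV, simplified])
qed

theorem proposition5p5:
  fixes B :: "int^'n^'n" and \<beta> :: "int^'n" and p :: real
  assumes "bounded (monomial_polyhedron B)"
    and "det B > 0"
    and "\<forall>i j. matrix_inv (map_matrix real_of_int B) $ i $ j \<ge> 0"
    and "p > 0"
  shows "((\<integral>\<^sup>+ z \<in> monomial_polyhedron B. ennreal (norm (monomial \<beta> z) powr p) \<partial>lborel) < \<infinity>)
     \<longleftrightarrow> (\<forall>j. ((\<chi> k. p * real_of_int (\<beta> $ k) + 2) v* map_matrix real_of_int (adjugate B)) $ j > 0)"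
proof -
  define Br where "Br = map_matrix real_of_int B"
  define Mi where "Mi = matrix_inv Br"
  define c :: "real^'n" where "c = (\<chi> k. p * real_of_int (\<beta> $ k) + 2)"
  define br :: "real^'n" where "br = (\<chi> k. real_of_int (\<beta> $ k))"
  define K where "K = {x::real^'n. \<forall>j. (Br *v x)$j < 0}"
  have detB: "det Br > 0" using assms(2) by (simp add: det_of_int Br_def)
  have BM: "Br ** Mi = mat 1" "Mi ** Br = mat 1" using inv_props[of Br] detB unfolding Mi_def by simp_all
  define G where "G x = ennreal (exp ((br \<bullet> x) * p)) * indicator K x" for x :: "real^'n"
  have Kmeas[measurable]: "K \<in> sets borel" unfolding K_def by measurable
  have Gmeas[measurable]: "G \<in> borel_measurable borel" unfolding G_def by measurable
  have step1: "(\<integral>\<^sup>+ z \<in> monomial_polyhedron B. ennreal (norm (monomial \<beta> z) powr p) \<partial>lborel) = (\<integral>\<^sup>+ z. G (Lg z) \<partial>lborel)"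
  proof (rule nn_integral_cong_AE)
    show "AE z in lborel. ennreal (norm (monomial \<beta> z) powr p) * indicator (monomial_polyhedron B) z = G (Lg z)"
      using AE_nonzero
    proof eventually_elim
      fix z :: "complex^'n" assume nz: "\<forall>k. z$k \<noteq> 0"
      have pos: "cmod (z$k) > 0" for k using nz by simp
      have nm: "norm (monomial \<beta> z) = exp (br \<bullet> Lg z)"
      proof -
        have "norm (monomial \<beta> z) = (\<Prod>k\<in>UNIV. norm (z$k) powi (\<beta>$k))"
          unfolding monomial_def by (simp add: prod_norm[symmetric] norm_power_int)
        also have "\<dots> = (\<Prod>k\<in>UNIV. exp (real_of_int (\<beta>$k) * ln (norm (z$k))))"
          using pos by (simp add: pw)
        also have "\<dots> = exp (br \<bullet> Lg z)"
          by (simp add: exp_sum inner_vec_def br_def Lg_def)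
        finally show ?thesis .
      qed
      have rowj: "(\<Prod>k\<in>UNIV. norm (z $ k) powi (B $ j $ k)) = exp ((Br *v Lg z)$j)" for j
      proof -
        have "(\<Prod>k\<in>UNIV. norm (z $ k) powi (B $ j $ k)) = (\<Prod>k\<in>UNIV. exp (real_of_int (B$j$k) * ln (norm (z$k))))"
          using pos by (simp add: pw)
        also have "\<dots> = exp ((Br *v Lg z)$j)"
          by (simp add: exp_sum matrix_vector_mult_def Br_def Lg_def)
        finally show ?thesis .
      qed
      have U: "z \<in> monomial_polyhedron B \<longleftrightarrow> Lg z \<in> K"
        unfolding monomial_polyhedron_def K_def using nz by (simp add: rowj)
      show "ennreal (norm (monomial \<beta> z) powr p) * indicator (monomial_polyhedron B) z = G (Lg z)"
        unfolding G_def by (simp add: nm U exp_powr_real split: split_indicator)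
    qed
  qed
  have step2: "(\<integral>\<^sup>+ z. G (Lg z) \<partial>lborel) = (\<integral>\<^sup>+ x. dens x * G x \<partial>lborel)"
  proof -
    have "(\<integral>\<^sup>+ z. G (Lg z) \<partial>lborel) = (\<integral>\<^sup>+ x. G x \<partial>(distr lborel borel Lg))"
      by (rule nn_integral_distr[symmetric]) auto
    also have "\<dots> = (\<integral>\<^sup>+ x. G x \<partial>(density lborel dens))" by (simp add: distr_Lg)
    also have "\<dots> = (\<integral>\<^sup>+ x. dens x * G x \<partial>lborel)" by (rule nn_integral_density) auto
    finally show ?thesis .
  qed
  have step3: "dens x * G x = ennreal ((2*pi)^CARD('n)) * (ennreal (exp (c \<bullet> x)) * indicator K x)" for x
  proof -
    have "dens x = ennreal (\<Prod>k\<in>UNIV. 2*pi*exp(2*x$k))"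
      unfolding dens_def by (rule prod_ennreal) auto
    also have "(\<Prod>k\<in>UNIV. 2*pi*exp(2*x$k)) = (2*pi)^CARD('n) * exp (\<Sum>k\<in>UNIV. 2*x$k)"
      by (simp add: prod.distrib exp_sum)
    finally have d: "dens x = ennreal ((2*pi)^CARD('n) * exp (\<Sum>k\<in>UNIV. 2*x$k))" .
    have cx: "c \<bullet> x = (br \<bullet> x) * p + (\<Sum>k\<in>UNIV. 2*x$k)"
      by (simp add: c_def br_def inner_vec_def algebra_simps sum.distrib sum_distrib_left)
    have "dens x * G x = ennreal ((2*pi)^CARD('n) * exp (\<Sum>k\<in>UNIV. 2*x$k)) * ennreal (exp ((br \<bullet> x) * p)) * indicator K x"
      by (simp add: d G_def mult.assoc)
    also have "\<dots> = ennreal ((2*pi)^CARD('n)) * (ennreal (exp (c \<bullet> x)) * indicator K x)"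
      by (simp add: cx exp_add ennreal_mult mult.assoc mult.left_commute)
    finally show ?thesis .
  qed
  define I where "I = (\<integral>\<^sup>+ x. ennreal (exp (c \<bullet> x)) * indicator K x \<partial>lborel)"
  have tot: "(\<integral>\<^sup>+ z \<in> monomial_polyhedron B. ennreal (norm (monomial \<beta> z) powr p) \<partial>lborel) = ennreal ((2*pi)^CARD('n)) * I"
    unfolding step1 step2 step3 I_def by (rule nn_integral_cmult) (auto simp: K_def)
  have fin: "(\<integral>\<^sup>+ z \<in> monomial_polyhedron B. ennreal (norm (monomial \<beta> z) powr p) \<partial>lborel) < \<infinity> \<longleftrightarrow> I < \<infinity>"
    unfolding tot by (auto simp: ennreal_mult_less_top)
  have coneq: "I < \<infinity> \<longleftrightarrow> (\<forall>j. (c v* Mi)$j > 0)"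
  proof
    assume "I < \<infinity>"
    show "\<forall>j. (c v* Mi)$j > 0"
    proof (rule ccontr)
      assume "\<not> (\<forall>j. (c v* Mi)$j > 0)"
      then obtain j where "(c v* Mi)$j \<le> 0" by (auto simp: not_less)
      from cone_inf[OF BM(2) BM(1) this] have "I = \<infinity>" unfolding I_def K_def .
      with \<open>I < \<infinity>\<close> show False by simp
    qed
  next
    assume "\<forall>j. (c v* Mi)$j > 0"
    from cone_fin[OF BM(2) BM(1) this] show "I < \<infinity>" unfolding I_def K_def .
  qed
  have adj: "(c v* map_matrix real_of_int (adjugate B))$j = det Br * (c v* Mi)$j" for j
    unfolding Br_def Mi_def by (rule adj_vec) (use assms(2) in auto)
  have "(\<forall>j. (c v* Mi)$j > 0) \<longleftrightarrow> (\<forall>j. (c v* map_matrix real_of_int (adjugate B))$j > 0)"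
    using detB by (simp add: adj zero_less_mult_iff)
  then show ?thesis using fin coneq unfolding c_def by simp
qed

end
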